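(* Let $(Y_t,X_t)_{t\ge1}$ be a hidden Markov model with finite state space $S=\{1,\dots,K\}$, $K>1$, and let $T\ge 1$. Let $C_1,C_2,C_3,C_4\ge 0$ with $C_1>0$ and $C_4>0$. For $x^T\in\mathcal X^T$ and $s^T\in S^T$ define the combined risk $$\mathcal R(s^T\mid x^T):=C_1\bar R_1(s^T|x^T)+C_2\bar R_\infty(s^T|x^T)+C_3\bar R_1(s^T)+C_4\bar R_\infty(s^T)\in[0,\infty].$$ Then for almost every realization $(x^T,y^T)$ of $(X^T,Y^T)$ (with respect to its joint law), $\min_{s^T\in S^T}\mathcal R(s^T\mid x^T)<\infty$, and every minimizer $s^T$ of $\mathcal R(\cdot\mid x^T)$ is admissible, i.e. satisfies $p(s^T|x^T)>0$.
   Context: Hidden Markov model: $Y=(Y_t)_{t\ge1}$ is a (possibly time-inhomogeneous) Markov chain on $S$ with initial distribution $\pi_j=\mathbf P(Y_1=j)$ and transition probabilities $p_{ij}$; given $Y$, the observations $X_t$ (taking values in a measurable space $(\mathcal X,\mathcal B)$) are conditionally independent, and the conditional law of $X_t$ depends on $Y$ only through $Y_t$, with density $f_s$ (w.r.t. a reference measure $\lambda$) when $Y_t=s$. Notation: $p(s^T)=\mathbf P(Y^T=s^T)$; $p(x^T,s^T)=p(s^T)\prod_{t=1}^T f_{s_t}(x_t)$; $p(x^T)=\sum_{s^T}p(x^T,s^T)$; $p(s^T|x^T)=p(x^T,s^T)/p(x^T)$; $p_t(s)=\mathbf P(Y_t=s)$; $p_t(s|x^T)=\mathbf P(Y_t=s\mid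 X^T=x^T)$. Risks (with $\log 0=-\infty$): $\bar R_1(s^T|x^T)=-\frac1T\sum_{t=1}^T\log p_t(s_t|x^T)$; $\bar R_\infty(s^T|x^T)=-\frac1T\log p(s^T|x^T)$; $\bar R_1(s^T)=-\frac1T\sum_{t=1}^T\log p_t(s_t)$; $\bar R_\infty(s^T)=-\frac1T\log p(s^T)$. *)

theory Defs
  imports "HOL-Probability.Probability"
begin

text \<open>Hidden Markov model with state space S = {1..K}, time indices 1..T.
  pi0 j = P(Y_1 = j); Ptr t i j = P(Y_(t+1) = j | Y_t = i) (time-inhomogeneous);
  f j = density of X_t given Y_t = j w.r.t. the reference measure M (lambda).\<close>

definition hmm_seqs :: "nat \<Rightarrow> nat \<Rightarrow> (nat \<Rightarrow> nat) set" where
  "hmm_seqs K T = PiE {1..T} (\<lambda>_. {1..K})"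

definition hmm_ps :: "(nat \<Rightarrow> real) \<Rightarrow> (nat \<Rightarrow> nat \<Rightarrow> nat \<Rightarrow> real) \<Rightarrow> nat \<Rightarrow> (nat \<Rightarrow> nat) \<Rightarrow> real" where
  "hmm_ps pi0 Ptr T s = pi0 (s 1) * (\<Prod>t\<in>{1..<T}. Ptr t (s t) (s (Suc t)))"

definition hmm_pt :: "(nat \<Rightarrow> real) \<Rightarrow> (nat \<Rightarrow> nat \<Rightarrow> nat \<Rightarrow> real) \<Rightarrow> nat \<Rightarrow> nat \<Rightarrow> nat \<Rightarrow> nat \<Rightarrow> real" where
  "hmm_pt pi0 Ptr K T t j = (\<Sum>s\<in>{s\<in>hmm_seqs K T. s t = j}. hmm_ps pi0 Ptr T s)"

definition hmm_pxs :: "(nat \<Rightarrow> real) \<Rightarrow> (nat \<Rightarrow> nat \<Rightarrow> nat \<Rightarrow> real) \<Rightarrow> (nat \<Rightarrow> 'x \<Rightarrow> real) \<Rightarrow> nat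
    \<Rightarrow> (nat \<Rightarrow> 'x) \<Rightarrow> (nat \<Rightarrow> nat) \<Rightarrow> real" where
  "hmm_pxs pi0 Ptr f T x s = hmm_ps pi0 Ptr T s * (\<Prod>t\<in>{1..T}. f (s t) (x t))"

definition hmm_px :: "(nat \<Rightarrow> real) \<Rightarrow> (nat \<Rightarrow> nat \<Rightarrow> nat \<Rightarrow> real) \<Rightarrow> (nat \<Rightarrow> 'x \<Rightarrow> real) \<Rightarrow> nat \<Rightarrow> nat
    \<Rightarrow> (nat \<Rightarrow> 'x) \<Rightarrow> real" where
  "hmm_px pi0 Ptr f K T x = (\<Sum>s\<in>hmm_seqs K T. hmm_pxs pi0 Ptr f T x s)"

definition hmm_post :: "(nat \<Rightarrow> real) \<Rightarrow> (nat \<Rightarrow> nat \<Rightarrow> nat \<Rightarrow> real) \<Rightarrow> (nat \<Rightarrow> 'x \<Rightarrow> real) \<Rightarrow> nat \<Rightarrow> nat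
    \<Rightarrow> (nat \<Rightarrow> 'x) \<Rightarrow> (nat \<Rightarrow> nat) \<Rightarrow> real" where
  "hmm_post pi0 Ptr f K T x s = hmm_pxs pi0 Ptr f T x s / hmm_px pi0 Ptr f K T x"

definition hmm_ptx :: "(nat \<Rightarrow> real) \<Rightarrow> (nat \<Rightarrow> nat \<Rightarrow> nat \<Rightarrow> real) \<Rightarrow> (nat \<Rightarrow> 'x \<Rightarrow> real) \<Rightarrow> nat \<Rightarrow> nat
    \<Rightarrow> nat \<Rightarrow> nat \<Rightarrow> (nat \<Rightarrow> 'x) \<Rightarrow> real" where
  "hmm_ptx pi0 Ptr f K T t j x = (\<Sum>s\<in>{s\<in>hmm_seqs K T. s t = j}. hmm_post pi0 Ptr f K T x s)"

definition elog :: "real \<Rightarrow> ereal" where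
  "elog r = (if r > 0 then ereal (ln r) else -\<infinity>)"

definition risk1_cond where
  "risk1_cond pi0 Ptr f K T x s =
     - (ereal (1 / real T) * (\<Sum>t\<in>{1..T}. elog (hmm_ptx pi0 Ptr f K T t (s t) x)))"

definition riskinf_cond where
  "riskinf_cond pi0 Ptr f K T x s = - (ereal (1 / real T) * elog (hmm_post pi0 Ptr f K T x s))"

definition risk1 where
  "risk1 pi0 Ptr K T s = - (ereal (1 / real T) * (\<Sum>t\<in>{1..T}. elog (hmm_pt pi0 Ptr K T t (s t))))"

definition riskinf where
  "riskinf pi0 Ptr T s = - (ereal (1 / real T) * elog (hmm_ps pi0 Ptr T s))"

definition comb_risk :: "real \<Rightarrow> real \<Rightarrow> real \<Rightarrow> real \<Rightarrow> (nat \<Rightarrow> real) \<Rightarrow> (nat \<Rightarrow> nat \<Rightarrow> nat \<Rightarrow> real)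
    \<Rightarrow> (nat \<Rightarrow> 'x \<Rightarrow> real) \<Rightarrow> nat \<Rightarrow> nat \<Rightarrow> (nat \<Rightarrow> 'x) \<Rightarrow> (nat \<Rightarrow> nat) \<Rightarrow> ereal" where
  "comb_risk C1 C2 C3 C4 pi0 Ptr f K T x s =
     ereal C1 * risk1_cond pi0 Ptr f K T x s + ereal C2 * riskinf_cond pi0 Ptr f K T x s
     + ereal C3 * risk1 pi0 Ptr K T s + ereal C4 * riskinf pi0 Ptr T s"

text \<open>Joint law of (X^T, Y^T): density p(x^T,s^T) w.r.t. lambda^T \<otimes> counting measure.\<close>
definition hmm_joint :: "'x measure \<Rightarrow> (nat \<Rightarrow> real) \<Rightarrow> (nat \<Rightarrow> nat \<Rightarrow> nat \<Rightarrow> real) \<Rightarrow> (nat \<Rightarrow> 'x \<Rightarrow> real)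
    \<Rightarrow> nat \<Rightarrow> nat \<Rightarrow> ((nat \<Rightarrow> 'x) \<times> (nat \<Rightarrow> nat)) measure" where
  "hmm_joint M pi0 Ptr f K T =
     density (PiM {1..T} (\<lambda>_. M) \<Otimes>\<^sub>M count_space (hmm_seqs K T))
       (\<lambda>(x, s). ennreal (hmm_pxs pi0 Ptr f T x s))"

end

theory Submission
  imports Defs
begin

lemma seqs_fin: "finite (hmm_seqs K T)"
  unfolding hmm_seqs_def by (auto intro: finite_PiE)

lemma seqs_mem: "s \<in> hmm_seqs K T \<Longrightarrow> t \<in> {1..T} \<Longrightarrow> s t \<in> {1..K}"
  unfolding hmm_seqs_def by (auto simp: PiE_def Pi_def)

lemma ps_nn:
  assumes T: "T \<ge> 1" and pi_nn: "\<forall>j\<in>{1..K}. pi0 j \<ge> 0"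
    and P_nn: "\<forall>t\<ge>1. \<forall>i\<in>{1..K}. \<forall>j\<in>{1..K}. Ptr t i j \<ge> 0"
    and s: "s \<in> hmm_seqs K T"
  shows "hmm_ps pi0 Ptr T s \<ge> 0"
proof -
  have "s 1 \<in> {1..K}" using seqs_mem[OF s] T by auto
  moreover have "\<forall>t\<in>{1..<T}. Ptr t (s t) (s (Suc t)) \<ge> 0"
    using seqs_mem[OF s] P_nn by auto
  ultimately show ?thesis unfolding hmm_ps_def using pi_nn
    by (intro mult_nonneg_nonneg prod_nonneg) auto
qed

lemma elog_fin: "r > 0 \<Longrightarrow> elog r = ereal (ln r)"
  unfolding elog_def by auto

lemma elog_ninf: "elog r \<noteq> \<infinity>"
  unfolding elog_def by auto

lemma elog_minf: "elog r \<noteq> -\<infinity> \<Longrightarrow> r > 0"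
  unfolding elog_def by (auto split: if_splits)

lemma neg_term: "e \<noteq> \<infinity> \<Longrightarrow> T \<ge> (1::nat) \<Longrightarrow> - (ereal (1 / real T) * e) \<noteq> -\<infinity>"
  by (cases e) auto

lemma neg_term_fin: "- (ereal (1 / real T) * e) \<noteq> \<infinity> \<Longrightarrow> T \<ge> (1::nat) \<Longrightarrow> e \<noteq> -\<infinity>"
  by (cases e) auto

lemma cmul_ninf: "C \<ge> 0 \<Longrightarrow> (e::ereal) \<noteq> -\<infinity> \<Longrightarrow> ereal C * e \<noteq> -\<infinity>"
  by (cases e) auto

lemma cmul_fin: "C > 0 \<Longrightarrow> ereal C * (e::ereal) \<noteq> \<infinity> \<Longrightarrow> e \<noteq> \<infinity>"
  by (cases e) auto

lemma add_fin: "(a::ereal) \<noteq> -\<infinity> \<Longrightarrow> b \<noteq> -\<infinity> \<Longrightarrow> a + b \<noteq> \<infinity> \<Longrightarrow> a \<noteq> \<infinity> \<and> b \<noteq> \<infinity>"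
  by (cases a; cases b) auto

lemma add_ninf: "(a::ereal) \<noteq> -\<infinity> \<Longrightarrow> b \<noteq> -\<infinity> \<Longrightarrow> a + b \<noteq> -\<infinity>"
  by (cases a; cases b) auto

lemma sum_elog_ninf: "finite A \<Longrightarrow> (\<Sum>t\<in>A. elog (g t)) \<noteq> \<infinity>"
  using elog_ninf by (simp add: sum_Pinfty)

lemma sum_elog_minf: "finite A \<Longrightarrow> (\<Sum>t\<in>A. elog (g t)) \<noteq> -\<infinity> \<Longrightarrow> t \<in> A \<Longrightarrow> g t > 0"
proof (induction A rule: finite_induct)
  case empty then show ?case by simp
next
  case (insert a A)
  have "elog (g a) + (\<Sum>t\<in>A. elog (g t)) \<noteq> -\<infinity>" using insert by simp
  hence "elog (g a) \<noteq> -\<infinity> \<and> (\<Sum>t\<in>A. elog (g t)) \<noteq> -\<infinity>"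
    using elog_ninf[of "g a"] sum_elog_ninf[OF insert(1), of g]
    by (cases "elog (g a)"; cases "\<Sum>t\<in>A. elog (g t)") auto
  then show ?case using insert elog_minf by auto
qed

lemma sum_elog_fin: "finite A \<Longrightarrow> (\<forall>t\<in>A. g t > 0) \<Longrightarrow> (\<Sum>t\<in>A. elog (g t)) = ereal (\<Sum>t\<in>A. ln (g t))"
  by (simp add: elog_fin)


lemma core:
  fixes pi0 :: "nat \<Rightarrow> real" and Ptr :: "nat \<Rightarrow> nat \<Rightarrow> nat \<Rightarrow> real"
    and f :: "nat \<Rightarrow> 'x \<Rightarrow> real" and K T :: nat and C1 C2 C3 C4 :: real and x :: "nat \<Rightarrow> 'x"
  assumes T: "T \<ge> 1"
    and pi_nn: "\<forall>j\<in>{1..K}. pi0 j \<ge> 0"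
    and P_nn: "\<forall>t\<ge>1. \<forall>i\<in>{1..K}. \<forall>j\<in>{1..K}. Ptr t i j \<ge> 0"
    and f_nn: "\<forall>j\<in>{1..K}. \<forall>t\<in>{1..T}. f j (x t) \<ge> 0"
    and C: "C1 > 0" "C2 \<ge> 0" "C3 \<ge> 0" "C4 > 0"
    and y: "y \<in> hmm_seqs K T" and ypos: "hmm_pxs pi0 Ptr f T x y > 0"
  shows "Min ((comb_risk C1 C2 C3 C4 pi0 Ptr f K T x) ` hmm_seqs K T) < \<infinity> \<and>
           (\<forall>s\<in>hmm_seqs K T.
              (\<forall>s'\<in>hmm_seqs K T. comb_risk C1 C2 C3 C4 pi0 Ptr f K T x s
                                   \<le> comb_risk C1 C2 C3 C4 pi0 Ptr f K T x s')
              \<longrightarrow> hmm_post pi0 Ptr f K T x s > 0)"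
proof -
  define S where "S = hmm_seqs K T"
  have finS: "finite S" unfolding S_def by (rule seqs_fin)
  have pxs_nn: "hmm_pxs pi0 Ptr f T x s \<ge> 0" if "s \<in> S" for s
  proof -
    have "\<forall>t\<in>{1..T}. f (s t) (x t) \<ge> 0" using f_nn seqs_mem[of s K T] that unfolding S_def by auto
    then show ?thesis unfolding hmm_pxs_def using ps_nn[OF T pi_nn P_nn, of s] that unfolding S_def
      by (intro mult_nonneg_nonneg prod_nonneg) auto
  qed
  have px_ge: "hmm_px pi0 Ptr f K T x \<ge> hmm_pxs pi0 Ptr f T x s" if "s \<in> S" for s
    unfolding hmm_px_def using that pxs_nn finS unfolding S_def by (intro member_le_sum) auto
  have pxpos: "hmm_px pi0 Ptr f K T x > 0" using px_ge[of y] y ypos unfolding S_def by auto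
  have post_nn: "hmm_post pi0 Ptr f K T x s \<ge> 0" if "s \<in> S" for s
    unfolding hmm_post_def using pxs_nn[OF that] pxpos by simp
  have post_pos: "hmm_post pi0 Ptr f K T x s > 0 \<longleftrightarrow> hmm_pxs pi0 Ptr f T x s > 0" for s
    unfolding hmm_post_def using pxpos by (simp add: divide_pos_pos zero_less_divide_iff)
  have ptx_ge: "hmm_ptx pi0 Ptr f K T t (s t) x \<ge> hmm_post pi0 Ptr f K T x s" if "s \<in> S" for s t
    unfolding hmm_ptx_def using that post_nn finS unfolding S_def by (intro member_le_sum) auto
  have pt_ge: "hmm_pt pi0 Ptr K T t (s t) \<ge> hmm_ps pi0 Ptr T s" if "s \<in> S" for s t
    unfolding hmm_pt_def using that ps_nn[OF T pi_nn P_nn] finS unfolding S_def by (intro member_le_sum) auto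
  have ypsne: "hmm_ps pi0 Ptr T y \<noteq> 0" using ypos unfolding hmm_pxs_def by auto
  have yps: "hmm_ps pi0 Ptr T y > 0" using ypsne ps_nn[OF T pi_nn P_nn y] by linarith
  have ypost: "hmm_post pi0 Ptr f K T x y > 0" using post_pos ypos by simp
  have ys: "y \<in> S" using y unfolding S_def .
  have "comb_risk C1 C2 C3 C4 pi0 Ptr f K T x y < \<infinity>"
  proof -
    have a: "\<forall>t\<in>{1..T}. hmm_ptx pi0 Ptr f K T t (y t) x > 0" using ptx_ge[OF ys] ypost by (meson less_le_trans)
    have b: "\<forall>t\<in>{1..T}. hmm_pt pi0 Ptr K T t (y t) > 0" using pt_ge[OF ys] yps by (meson less_le_trans)
    show ?thesis unfolding comb_risk_def risk1_cond_def riskinf_cond_def risk1_def riskinf_def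
      using sum_elog_fin[OF _ a] sum_elog_fin[OF _ b] elog_fin[OF ypost] elog_fin[OF yps]
      by simp
  qed
  hence minfin: "Min ((comb_risk C1 C2 C3 C4 pi0 Ptr f K T x) ` S) < \<infinity>"
    using ys finS by (meson Min_le finite_imageI image_eqI le_less_trans)
  have "hmm_post pi0 Ptr f K T x s > 0"
    if s: "s \<in> S" and smin: "\<forall>s'\<in>S. comb_risk C1 C2 C3 C4 pi0 Ptr f K T x s
                                   \<le> comb_risk C1 C2 C3 C4 pi0 Ptr f K T x s'" for s
  proof -
    have fin: "comb_risk C1 C2 C3 C4 pi0 Ptr f K T x s < \<infinity>"
      using smin ys \<open>comb_risk C1 C2 C3 C4 pi0 Ptr f K T x y < \<infinity>\<close> by (meson le_less_trans)
    define a where "a = ereal C1 * risk1_cond pi0 Ptr f K T x s"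
    define b where "b = ereal C2 * riskinf_cond pi0 Ptr f K T x s"
    define c where "c = ereal C3 * risk1 pi0 Ptr K T s"
    define d where "d = ereal C4 * riskinf pi0 Ptr T s"
    have an: "a \<noteq> -\<infinity>" unfolding a_def risk1_cond_def
      using C T by (intro cmul_ninf neg_term sum_elog_ninf) auto
    have bn: "b \<noteq> -\<infinity>" unfolding b_def riskinf_cond_def
      using C T by (intro cmul_ninf neg_term elog_ninf) auto
    have cn: "c \<noteq> -\<infinity>" unfolding c_def risk1_def
      using C T by (intro cmul_ninf neg_term sum_elog_ninf) auto
    have dn: "d \<noteq> -\<infinity>" unfolding d_def riskinf_def
      using C T by (intro cmul_ninf neg_term elog_ninf) auto
    have "a + b + c + d < \<infinity>" using fin unfolding comb_risk_def a_def b_def c_def d_def .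
    hence abcd: "a + b + c + d \<noteq> \<infinity>" by simp
    have abn: "a + b \<noteq> -\<infinity>" using add_ninf[OF an bn] .
    have abcn: "a + b + c \<noteq> -\<infinity>" using add_ninf[OF abn cn] .
    have h1: "a + b + c \<noteq> \<infinity> \<and> d \<noteq> \<infinity>" using add_fin[OF abcn dn abcd] .
    have h2: "a + b \<noteq> \<infinity> \<and> c \<noteq> \<infinity>" using add_fin[OF abn cn] h1 by blast
    have h3: "a \<noteq> \<infinity> \<and> b \<noteq> \<infinity>" using add_fin[OF an bn] h2 by blast
    have "a \<noteq> \<infinity>" "d \<noteq> \<infinity>" using h1 h3 by blast+
    hence r1: "risk1_cond pi0 Ptr f K T x s \<noteq> \<infinity>" and r4: "riskinf pi0 Ptr T s \<noteq> \<infinity>"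
      unfolding a_def d_def using cmul_fin C by blast+
    have psp: "hmm_ps pi0 Ptr T s > 0"
      using r4 T unfolding riskinf_def by (intro elog_minf neg_term_fin)
    have ptxp: "hmm_ptx pi0 Ptr f K T t (s t) x > 0" if t: "t \<in> {1..T}" for t
      using r1 T t unfolding risk1_cond_def by (intro sum_elog_minf[of "{1..T}"] neg_term_fin) auto
    have fpos: "f (s t) (x t) > 0" if t: "t \<in> {1..T}" for t
    proof (rule ccontr)
      assume nf: "\<not> f (s t) (x t) > 0"
      have "hmm_post pi0 Ptr f K T x s' = 0" if s': "s' \<in> {s'\<in>S. s' t = s t}" for s'
      proof -
        have "f (s' t) (x t) = 0" using nf f_nn seqs_mem[of s' K T t] s' t unfolding S_def by force
        hence "(\<Prod>t\<in>{1..T}. f (s' t) (x t)) = 0" using t by (intro prod_zero) auto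
        hence "hmm_pxs pi0 Ptr f T x s' = 0" unfolding hmm_pxs_def by simp
        thus ?thesis unfolding hmm_post_def by simp
      qed
      hence "hmm_ptx pi0 Ptr f K T t (s t) x = 0" unfolding hmm_ptx_def S_def by simp
      thus False using ptxp[OF t] by simp
    qed
    have "hmm_pxs pi0 Ptr f T x s > 0" unfolding hmm_pxs_def using psp fpos
      by (intro mult_pos_pos prod_pos) auto
    thus ?thesis using post_pos by simp
  qed
  thus ?thesis using minfin unfolding S_def by blast
qed

theorem proposition1:
  fixes M :: "'x measure" and pi0 :: "nat \<Rightarrow> real" and Ptr :: "nat \<Rightarrow> nat \<Rightarrow> nat \<Rightarrow> real"
    and f :: "nat \<Rightarrow> 'x \<Rightarrow> real" and K T :: nat and C1 C2 C3 C4 :: real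
  assumes K: "K > 1" and T: "T \<ge> 1"
    and sf: "sigma_finite_measure M"
    and pi_nn: "\<forall>j\<in>{1..K}. pi0 j \<ge> 0" and pi_sum: "(\<Sum>j\<in>{1..K}. pi0 j) = 1"
    and P_nn: "\<forall>t\<ge>1. \<forall>i\<in>{1..K}. \<forall>j\<in>{1..K}. Ptr t i j \<ge> 0"
    and P_sum: "\<forall>t\<ge>1. \<forall>i\<in>{1..K}. (\<Sum>j\<in>{1..K}. Ptr t i j) = 1"
    and f_meas: "\<forall>j\<in>{1..K}. f j \<in> borel_measurable M"
    and f_nn: "\<forall>j\<in>{1..K}. \<forall>x\<in>space M. f j x \<ge> 0"
    and f_int: "\<forall>j\<in>{1..K}. (\<integral>\<^sup>+ x. ennreal (f j x) \<partial>M) = 1"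
    and C: "C1 > 0" "C2 \<ge> 0" "C3 \<ge> 0" "C4 > 0"
  shows "AE z in hmm_joint M pi0 Ptr f K T.
           Min ((comb_risk C1 C2 C3 C4 pi0 Ptr f K T (fst z)) ` hmm_seqs K T) < \<infinity> \<and>
           (\<forall>s\<in>hmm_seqs K T.
              (\<forall>s'\<in>hmm_seqs K T. comb_risk C1 C2 C3 C4 pi0 Ptr f K T (fst z) s
                                   \<le> comb_risk C1 C2 C3 C4 pi0 Ptr f K T (fst z) s')
              \<longrightarrow> hmm_post pi0 Ptr f K T (fst z) s > 0)"
proof -
  let ?N = "PiM {1..T} (\<lambda>_. M) \<Otimes>\<^sub>M count_space (hmm_seqs K T)"
  let ?P = "\<lambda>z. Min ((comb_risk C1 C2 C3 C4 pi0 Ptr f K T (fst z)) ` hmm_seqs K T) < \<infinity> \<and>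
           (\<forall>s\<in>hmm_seqs K T.
              (\<forall>s'\<in>hmm_seqs K T. comb_risk C1 C2 C3 C4 pi0 Ptr f K T (fst z) s
                                   \<le> comb_risk C1 C2 C3 C4 pi0 Ptr f K T (fst z) s')
              \<longrightarrow> hmm_post pi0 Ptr f K T (fst z) s > 0)"
  have mi: "(\<lambda>x. ennreal (hmm_pxs pi0 Ptr f T x i)) \<in> borel_measurable (PiM {1..T} (\<lambda>_. M))"
    if i: "i \<in> hmm_seqs K T" for i
  proof -
    have "(\<lambda>x. f (i t) (x t)) \<in> borel_measurable (PiM {1..T} (\<lambda>_. M))" if t: "t \<in> {1..T}" for t
      using measurable_compose[OF measurable_component_singleton[OF t, of "\<lambda>_. M"], of "f (i t)" borel]
        f_meas seqs_mem[OF i t] by auto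
    hence "(\<lambda>x. \<Prod>t\<in>{1..T}. f (i t) (x t)) \<in> borel_measurable (PiM {1..T} (\<lambda>_. M))"
      by (intro borel_measurable_prod) auto
    hence "(\<lambda>x. hmm_pxs pi0 Ptr f T x i) \<in> borel_measurable (PiM {1..T} (\<lambda>_. M))"
      unfolding hmm_pxs_def by simp
    thus ?thesis by simp
  qed
  have meas: "(\<lambda>(x, s). ennreal (hmm_pxs pi0 Ptr f T x s)) \<in> borel_measurable ?N"
  proof -
    have "(\<lambda>z. ennreal (hmm_pxs pi0 Ptr f T (fst z) (snd z))) \<in> borel_measurable ?N"
    proof (rule measurable_compose_countable'[where g = snd and I = "hmm_seqs K T"
          and f = "\<lambda>i z. ennreal (hmm_pxs pi0 Ptr f T (fst z) i)"])
      fix i assume "i \<in> hmm_seqs K T"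
      then show "(\<lambda>z. ennreal (hmm_pxs pi0 Ptr f T (fst z) i)) \<in> borel_measurable ?N"
        using measurable_compose[OF measurable_fst mi] by simp
    next
      show "snd \<in> ?N \<rightarrow>\<^sub>M count_space (hmm_seqs K T)" by (rule measurable_snd)
    next
      show "countable (hmm_seqs K T)" using seqs_fin by (rule countable_finite)
    qed
    thus ?thesis by (simp add: case_prod_beta)
  qed
  have "AE z in ?N. 0 < (\<lambda>(x, s). ennreal (hmm_pxs pi0 Ptr f T x s)) z \<longrightarrow> ?P z"
  proof (rule AE_I2, intro impI)
    fix z assume z: "z \<in> space ?N" and pos: "0 < (\<lambda>(x, s). ennreal (hmm_pxs pi0 Ptr f T x s)) z"
    obtain x y where zxy: "z = (x, y)" by (cases z)
    have y: "y \<in> hmm_seqs K T" and x: "x \<in> space (PiM {1..T} (\<lambda>_. M))"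
      using z zxy by (auto simp: space_pair_measure)
    have xs: "\<forall>t\<in>{1..T}. x t \<in> space M" using x by (auto simp: space_PiM PiE_def Pi_def)
    have ypos: "hmm_pxs pi0 Ptr f T x y > 0" using pos zxy by (simp add: ennreal_less_zero_iff)
    show "?P z" unfolding zxy fst_conv
      by (rule core[OF T pi_nn P_nn _ C y ypos]) (use f_nn xs in auto)
  qed
  thus ?thesis unfolding hmm_joint_def by (subst AE_density[OF meas])
qed

end
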